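(* Under assumptions (A1)–(A6), for (almost) every $x$, $$\psi(x) = P(Y(1,0)=0\mid Y(1,1)=1,M(1)=1,X=x)\,P(M(0)=0\mid M(1)=1,X=x),$$ and consequently $$\psi(x)\le P(M(0)=0\mid M(1)=1,X=x) = 1-\frac{\gamma_0(x)}{\gamma_1(x)}.$$
   Context: Observed data $O=(X,A,M,Y)$ with covariates $X\in\mathbb{R}^d$, binary exposure $A$, binary mediator $M$, binary outcome $Y$. For $a,m\in\{0,1\}$, $Y(a,m)$ is the potential outcome under $A=a,M=m$, $M(a)$ the potential mediator, $Y(a):=Y(a,M(a))$, cross-world $Y(a,M(a'))$ by substitution, all on a common probability space with $O$. $\gamma_a(x)=P(M=1\mid A=a,X=x)$. $\psi(x)=P(Y(1,M(0))=0,\,Y(0,M(0))=0\mid Y(1,M(1))=1,M(1)=1,X=x)$. Assumptions: (A1) $A=a,M=m\Rightarrow Y=Y(a,m)$ and $A=a\Rightarrow M=M(a)$. (A2) $Y(1,1)\ge Y(1,0)\ge Y(0,0)$, $Y(1,1)\ge Y(0,1)$, $M(1)\ge M(0)$. (A3) $A\perp\{Y(1,1),Y(1,0),Y(0,1),Y(0,0),M(1),M(0)\}\mid X$. (A4) $\{Y(1,1),Y(1,0),Y(0,1),Y(0,0)\}\perp\{M(1),M(0)\}\mid X$. (A5) for some $\epsilon>0$, $P\{\min_{a,m}P(A=a,M=m\mid X)\ge\epsilon\}=1$. (A6) $P\{P(Y=1\mid A=1,M=1,X)\ge\epsilon\}=1$. *)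

theory Defs
  imports "HOL-Probability.Probability"
begin

definition sigmaX :: "'a measure \<Rightarrow> ('a \<Rightarrow> 'x::topological_space) \<Rightarrow> 'a measure" where
  "sigmaX M X = vimage_algebra (space M) X borel"

definition cprobX :: "'a measure \<Rightarrow> ('a \<Rightarrow> 'x::topological_space) \<Rightarrow> 'a set \<Rightarrow> 'a \<Rightarrow> real" where
  "cprobX M X E = real_cond_exp M (sigmaX M X) (indicator (E \<inter> space M))"

definition ccprobX :: "'a measure \<Rightarrow> ('a \<Rightarrow> 'x::topological_space) \<Rightarrow> 'a set \<Rightarrow> 'a set \<Rightarrow> 'a \<Rightarrow> real" where
  "ccprobX M X E C = (\<lambda>\<omega>. cprobX M X (E \<inter> C) \<omega> / cprobX M X C \<omega>)"

definition cond_indepX ::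
  "'a measure \<Rightarrow> ('a \<Rightarrow> 'x::topological_space) \<Rightarrow> 'u measure \<Rightarrow> ('a \<Rightarrow> 'u) \<Rightarrow> 'v measure \<Rightarrow> ('a \<Rightarrow> 'v) \<Rightarrow> bool" where
  "cond_indepX M X MU U MV V \<longleftrightarrow>
     (\<forall>S\<in>sets MU. \<forall>T\<in>sets MV. AE \<omega> in M.
        cprobX M X (U -` S \<inter> V -` T \<inter> space M) \<omega> =
        cprobX M X (U -` S \<inter> space M) \<omega> * cprobX M X (V -` T \<inter> space M) \<omega>)"

end

theory Submission imports Defs begin

lemma sfs_sigmaX:
  assumes "prob_space M" "X \<in> borel_measurable M"
  shows "sigma_finite_subalgebra M (sigmaX M X)"
proof -
  interpret prob_space M by fact
  have "subalgebra M (sigmaX M X)"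
    unfolding subalgebra_def sigmaX_def
    using sets_vimage_algebra2[of X "space M" borel] measurable_sets[OF assms(2)]
      measurable_space[OF assms(2)] by auto
  then have "finite_measure_subalgebra M (sigmaX M X)"
    by (simp add: finite_measure_subalgebra_def finite_measure_subalgebra_axioms_def finite_measure_axioms)
  then show ?thesis by (rule finite_measure_subalgebra_is_sigma_finite)
qed

lemma cprob_cong: "E \<inter> space M = F \<inter> space M \<Longrightarrow> cprobX M X E = cprobX M X F"
  unfolding cprobX_def by simp

lemma int_ind:
  assumes "prob_space M" "E \<inter> space M \<in> sets M"
  shows "integrable M (indicator (E \<inter> space M) :: _ \<Rightarrow> real)"
  using assms by (simp add: finite_measure.emeasure_finite prob_space.finite_measure
      less_top[symmetric])

lemma cprob_nonneg:
  assumes "prob_space M" "X \<in> borel_measurable M" "E \<inter> space M \<in> sets M"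
  shows "AE \<omega> in M. cprobX M X E \<omega> \<ge> 0"
proof -
  interpret sigma_finite_subalgebra M "sigmaX M X" using sfs_sigmaX assms by blast
  show ?thesis unfolding cprobX_def
    by (rule real_cond_exp_pos) (use assms in auto)
qed

lemma cprob_mono:
  assumes "prob_space M" "X \<in> borel_measurable M" "E \<inter> space M \<in> sets M" "F \<inter> space M \<in> sets M"
    "E \<inter> space M \<subseteq> F"
  shows "AE \<omega> in M. cprobX M X E \<omega> \<le> cprobX M X F \<omega>"
proof -
  interpret sigma_finite_subalgebra M "sigmaX M X" using sfs_sigmaX assms by blast
  show ?thesis unfolding cprobX_def
    by (rule real_cond_exp_mono) (use assms int_ind in \<open>auto simp: indicator_def\<close>)
qed

lemma cprob_add:
  assumes "prob_space M" "X \<in> borel_measurable M" "E \<inter> space M \<in> sets M" "F \<inter> space M \<in> sets M"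
    "E \<inter> F \<inter> space M = {}"
  shows "AE \<omega> in M. cprobX M X (E \<union> F) \<omega> = cprobX M X E \<omega> + cprobX M X F \<omega>"
proof -
  interpret sigma_finite_subalgebra M "sigmaX M X" using sfs_sigmaX assms by blast
  have eq: "indicator ((E \<union> F) \<inter> space M) = (\<lambda>x. indicator (E \<inter> space M) x + (indicator (F \<inter> space M) x :: real))"
    using assms(5) by (auto simp: indicator_def fun_eq_iff)
  show ?thesis unfolding cprobX_def eq
    by (rule real_cond_exp_add) (use assms int_ind in auto)
qed

lemma pred_set: "Measurable.pred M P \<Longrightarrow> {\<omega>. P \<omega>} \<inter> space M \<in> sets M"
proof -
  assume [measurable]: "Measurable.pred M P"
  have "{\<omega>. P \<omega>} \<inter> space M = {\<omega>\<in>space M. P \<omega>}" by auto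
  then show ?thesis by simp
qed

lemma indep_use:
  assumes "cond_indepX M X (count_space UNIV) U (count_space UNIV) V"
    "\<And>\<omega>. \<omega>\<in>space M \<Longrightarrow> \<omega>\<in>E \<longleftrightarrow> (U \<omega> \<in> S \<and> V \<omega> \<in> T)"
    "\<And>\<omega>. \<omega>\<in>space M \<Longrightarrow> \<omega>\<in>E1 \<longleftrightarrow> U \<omega> \<in> S"
    "\<And>\<omega>. \<omega>\<in>space M \<Longrightarrow> \<omega>\<in>E2 \<longleftrightarrow> V \<omega> \<in> T"
  shows "AE \<omega> in M. cprobX M X E \<omega> = cprobX M X E1 \<omega> * cprobX M X E2 \<omega>"
proof -
  have "cprobX M X E = cprobX M X (U -` S \<inter> V -` T \<inter> space M)"
    by (rule cprob_cong) (use assms(2) in auto)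
  moreover have "cprobX M X E1 = cprobX M X (U -` S \<inter> space M)"
    by (rule cprob_cong) (use assms(3) in auto)
  moreover have "cprobX M X E2 = cprobX M X (V -` T \<inter> space M)"
    by (rule cprob_cong) (use assms(4) in auto)
  ultimately show ?thesis using assms(1) unfolding cond_indepX_def by simp
qed

lemma alg:
  fixes a y m1 m10 m0 pA pnA q e :: real
  assumes "0\<le>a" "a\<le>y" "0 \<le> m10" "0\<le>m0" "0\<le>pA" "0\<le>pnA" "0\<le>q" "0\<le>m1" "e>0"
    "pA*m1 \<ge> e" "pnA*q \<ge> e" "m1 = m10+m0"
  shows "a*m10/(y*m1) = a*m1/(y*m1) * (m10/m1) \<and> a*m10/(y*m1) \<le> m10/m1 \<and>
         m10/m1 = 1 - (pnA*m0/pnA)/(pA*m1/pA)"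
proof -
  have pA: "pA > 0" and m1: "m1 > 0"
    using assms by (metis less_le_trans mult_eq_0_iff order_le_less)+
  have pnA: "pnA > 0"
    using assms by (metis less_le_trans mult_eq_0_iff order_le_less)
  have 1: "a*m10/(y*m1) = a*m1/(y*m1) * (m10/m1)" using m1 by (simp add: field_simps)
  have 2: "a*m10/(y*m1) \<le> m10/m1"
  proof (cases "y = 0")
    case True then show ?thesis using assms m1 by simp
  next
    case False
    then have y: "y > 0" using assms by linarith
    have "a*m10/(y*m1) = (a/y)*(m10/m1)" by simp
    also have "\<dots> \<le> 1 * (m10/m1)"
      by (rule mult_right_mono) (use y assms m1 in auto)
    finally show ?thesis by simp
  qed
  have 3: "m10/m1 = 1 - (pnA*m0/pnA)/(pA*m1/pA)"
  proof -
    have "pnA*m0/pnA = m0" "pA*m1/pA = m1" using pA pnA by simp_all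
    moreover have "m10/m1 = 1 - m0/m1" using m1 assms(12) by (simp add: field_simps)
    ultimately show ?thesis by simp
  qed
  show ?thesis using 1 2 3 by blast
qed

theorem mainTheorem7:
  fixes M :: "'a measure"
    and X :: "'a \<Rightarrow> real ^ 'd"
    and A Med Y :: "'a \<Rightarrow> bool"
    and Ypo :: "bool \<Rightarrow> bool \<Rightarrow> 'a \<Rightarrow> bool"
    and Mpo :: "bool \<Rightarrow> 'a \<Rightarrow> bool"
  assumes prob: "prob_space M"
    and X_meas: "X \<in> borel_measurable M"
    and A_meas: "A \<in> measurable M (count_space UNIV)"
    and Med_meas: "Med \<in> measurable M (count_space UNIV)"
    and Y_meas: "Y \<in> measurable M (count_space UNIV)"
    and Ypo_meas: "\<And>a m. Ypo a m \<in> measurable M (count_space UNIV)"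
    and Mpo_meas: "\<And>a. Mpo a \<in> measurable M (count_space UNIV)"
    \<comment> \<open>(A1) consistency\<close>
    and A1: "\<And>\<omega> a m. \<omega> \<in> space M \<Longrightarrow> A \<omega> = a \<Longrightarrow> Med \<omega> = m \<Longrightarrow> Y \<omega> = Ypo a m \<omega>"
    and A1': "\<And>\<omega> a. \<omega> \<in> space M \<Longrightarrow> A \<omega> = a \<Longrightarrow> Med \<omega> = Mpo a \<omega>"
    \<comment> \<open>(A2) monotonicity\<close>
    and A2: "\<And>\<omega>. \<omega> \<in> space M \<Longrightarrow>
               Ypo True True \<omega> \<ge> Ypo True False \<omega> \<and> Ypo True False \<omega> \<ge> Ypo False False \<omega> \<and>
               Ypo True True \<omega> \<ge> Ypo False True \<omega> \<and> Mpo True \<omega> \<ge> Mpo False \<omega>"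
    \<comment> \<open>(A3) no unmeasured confounding of exposure\<close>
    and A3: "cond_indepX M X (count_space UNIV) A (count_space UNIV)
               (\<lambda>\<omega>. (Ypo True True \<omega>, Ypo True False \<omega>, Ypo False True \<omega>, Ypo False False \<omega>,
                     Mpo True \<omega>, Mpo False \<omega>))"
    \<comment> \<open>(A4) potential outcomes independent of potential mediators given X\<close>
    and A4: "cond_indepX M X (count_space UNIV)
               (\<lambda>\<omega>. (Ypo True True \<omega>, Ypo True False \<omega>, Ypo False True \<omega>, Ypo False False \<omega>))
               (count_space UNIV) (\<lambda>\<omega>. (Mpo True \<omega>, Mpo False \<omega>))"
    \<comment> \<open>(A5) and (A6) positivity, with a common \<epsilon>\<close>
    and A56: "\<exists>\<epsilon>>0.
               (AE \<omega> in M. \<forall>a m. cprobX M X {\<omega>'. A \<omega>' = a \<and> Med \<omega>' = m} \<omega> \<ge> \<epsilon>) \<and>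
               (AE \<omega> in M. ccprobX M X {\<omega>'. Y \<omega>'} {\<omega>'. A \<omega>' \<and> Med \<omega>'} \<omega> \<ge> \<epsilon>)"
  shows "AE \<omega> in M.
    (let \<psi> = ccprobX M X {\<omega>'. \<not> Ypo True (Mpo False \<omega>') \<omega>' \<and> \<not> Ypo False (Mpo False \<omega>') \<omega>'}
                       {\<omega>'. Ypo True (Mpo True \<omega>') \<omega>' \<and> Mpo True \<omega>'} \<omega>;
         p1 = ccprobX M X {\<omega>'. \<not> Ypo True False \<omega>'} {\<omega>'. Ypo True True \<omega>' \<and> Mpo True \<omega>'} \<omega>;
         p2 = ccprobX M X {\<omega>'. \<not> Mpo False \<omega>'} {\<omega>'. Mpo True \<omega>'} \<omega>;
         \<gamma>0 = ccprobX M X {\<omega>'. Med \<omega>'} {\<omega>'. \<not> A \<omega>'} \<omega>;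
         \<gamma>1 = ccprobX M X {\<omega>'. Med \<omega>'} {\<omega>'. A \<omega>'} \<omega>
     in \<psi> = p1 * p2 \<and> \<psi> \<le> p2 \<and> p2 = 1 - \<gamma>0 / \<gamma>1)"
proof -
  have A2': "\<And>\<omega>. \<omega> \<in> space M \<Longrightarrow>
      (Ypo True False \<omega> \<longrightarrow> Ypo True True \<omega>) \<and> (Ypo False False \<omega> \<longrightarrow> Ypo True False \<omega>) \<and>
      (Ypo False True \<omega> \<longrightarrow> Ypo True True \<omega>) \<and> (Mpo False \<omega> \<longrightarrow> Mpo True \<omega>)"
    using A2 by (simp add: le_bool_def)
  have [measurable]: "\<And>a m. Measurable.pred M (Ypo a m)" "\<And>a. Measurable.pred M (Mpo a)"
    "Measurable.pred M A" "Measurable.pred M Med"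
    using Ypo_meas Mpo_meas A_meas Med_meas by (auto simp: pred_def)
  obtain e where e: "e > 0" and eA: "AE \<omega> in M. \<forall>a m. cprobX M X {\<omega>'. A \<omega>' = a \<and> Med \<omega>' = m} \<omega> \<ge> e"
    using A56 by blast
  note base = prob X_meas
  have f1: "AE \<omega> in M. cprobX M X ({\<omega>'. \<not> Ypo True (Mpo False \<omega>') \<omega>' \<and> \<not> Ypo False (Mpo False \<omega>') \<omega>'}
          \<inter> {\<omega>'. Ypo True (Mpo True \<omega>') \<omega>' \<and> Mpo True \<omega>'}) \<omega>
        = cprobX M X {\<omega>. Ypo True True \<omega> \<and> \<not> Ypo True False \<omega>} \<omega> * cprobX M X {\<omega>. Mpo True \<omega> \<and> \<not> Mpo False \<omega>} \<omega>"
    apply (rule indep_use[OF A4, where S="{t. fst t \<and> \<not> fst (snd t)}" and T="{t. fst t \<and> \<not> snd t}"])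
    subgoal for \<omega> using A2'[of \<omega>] by (cases "Mpo False \<omega>"; cases "Mpo True \<omega>") auto
    by auto
  have f2: "AE \<omega> in M. cprobX M X {\<omega>'. Ypo True (Mpo True \<omega>') \<omega>' \<and> Mpo True \<omega>'} \<omega>
        = cprobX M X {\<omega>. Ypo True True \<omega>} \<omega> * cprobX M X {\<omega>. Mpo True \<omega>} \<omega>"
    apply (rule indep_use[OF A4, where S="{t. fst t}" and T="{t. fst t}"])
    subgoal for \<omega> by (cases "Mpo True \<omega>") auto
    by auto
  have f3: "AE \<omega> in M. cprobX M X ({\<omega>'. \<not> Ypo True False \<omega>'} \<inter> {\<omega>'. Ypo True True \<omega>' \<and> Mpo True \<omega>'}) \<omega>
        = cprobX M X {\<omega>. Ypo True True \<omega> \<and> \<not> Ypo True False \<omega>} \<omega> * cprobX M X {\<omega>. Mpo True \<omega>} \<omega>"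
    by (rule indep_use[OF A4, where S="{t. fst t \<and> \<not> fst (snd t)}" and T="{t. fst t}"]) auto
  have f4: "AE \<omega> in M. cprobX M X {\<omega>'. Ypo True True \<omega>' \<and> Mpo True \<omega>'} \<omega>
        = cprobX M X {\<omega>. Ypo True True \<omega>} \<omega> * cprobX M X {\<omega>. Mpo True \<omega>} \<omega>"
    by (rule indep_use[OF A4, where S="{t. fst t}" and T="{t. fst t}"]) auto
  have f5: "cprobX M X ({\<omega>'. \<not> Mpo False \<omega>'} \<inter> {\<omega>'. Mpo True \<omega>'}) = cprobX M X {\<omega>. Mpo True \<omega> \<and> \<not> Mpo False \<omega>}"
    by (rule cprob_cong) auto
  have g0: "AE \<omega> in M. cprobX M X ({\<omega>'. Med \<omega>'} \<inter> {\<omega>'. \<not> A \<omega>'}) \<omega>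
        = cprobX M X {\<omega>. \<not> A \<omega>} \<omega> * cprobX M X {\<omega>. Mpo False \<omega>} \<omega>"
    apply (rule indep_use[OF A3, where S="{False}" and T="{t. snd (snd (snd (snd (snd t))))}"])
    subgoal for \<omega> using A1'[of \<omega> "A \<omega>"] by (cases "A \<omega>") auto
    by auto
  have g1: "AE \<omega> in M. cprobX M X ({\<omega>'. Med \<omega>'} \<inter> {\<omega>'. A \<omega>'}) \<omega>
        = cprobX M X {\<omega>. A \<omega>} \<omega> * cprobX M X {\<omega>. Mpo True \<omega>} \<omega>"
    apply (rule indep_use[OF A3, where S="{True}" and T="{t. fst (snd (snd (snd (snd t))))}"])
    subgoal for \<omega> using A1'[of \<omega> "A \<omega>"] by (cases "A \<omega>") auto
    by auto
  have e1: "AE \<omega> in M. cprobX M X {\<omega>'. A \<omega>' = True \<and> Med \<omega>' = True} \<omega>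
        = cprobX M X {\<omega>. A \<omega>} \<omega> * cprobX M X {\<omega>. Mpo True \<omega>} \<omega>"
    apply (rule indep_use[OF A3, where S="{True}" and T="{t. fst (snd (snd (snd (snd t))))}"])
    subgoal for \<omega> using A1'[of \<omega> "A \<omega>"] by (cases "A \<omega>") auto
    by auto
  have e2: "AE \<omega> in M. cprobX M X {\<omega>'. A \<omega>' = False \<and> Med \<omega>' = False} \<omega>
        = cprobX M X {\<omega>. \<not> A \<omega>} \<omega> * cprobX M X {\<omega>. \<not> Mpo False \<omega>} \<omega>"
    apply (rule indep_use[OF A3, where S="{False}" and T="{t. \<not> snd (snd (snd (snd (snd t))))}"])
    subgoal for \<omega> using A1'[of \<omega> "A \<omega>"] by (cases "A \<omega>") auto
    by auto
  have add0: "AE \<omega> in M. cprobX M X ({\<omega>. Mpo True \<omega> \<and> \<not> Mpo False \<omega>} \<union> {\<omega>. Mpo False \<omega>}) \<omega>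
      = cprobX M X {\<omega>. Mpo True \<omega> \<and> \<not> Mpo False \<omega>} \<omega> + cprobX M X {\<omega>. Mpo False \<omega>} \<omega>"
    by (rule cprob_add[OF base]) (auto intro!: pred_set)
  have c1: "cprobX M X ({\<omega>. Mpo True \<omega> \<and> \<not> Mpo False \<omega>} \<union> {\<omega>. Mpo False \<omega>}) = cprobX M X {\<omega>. Mpo True \<omega>}"
    by (rule cprob_cong) (use A2' in blast)
  have mono: "AE \<omega> in M. cprobX M X {\<omega>. Ypo True True \<omega> \<and> \<not> Ypo True False \<omega>} \<omega> \<le> cprobX M X {\<omega>. Ypo True True \<omega>} \<omega>"
    by (rule cprob_mono[OF base]) (auto intro!: pred_set)
  have n1: "AE \<omega> in M. cprobX M X {\<omega>. Ypo True True \<omega> \<and> \<not> Ypo True False \<omega>} \<omega> \<ge> 0"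
    by (rule cprob_nonneg[OF base]) (auto intro!: pred_set)
  have n2: "AE \<omega> in M. cprobX M X {\<omega>. Mpo True \<omega> \<and> \<not> Mpo False \<omega>} \<omega> \<ge> 0"
    by (rule cprob_nonneg[OF base]) (auto intro!: pred_set)
  have n3: "AE \<omega> in M. cprobX M X {\<omega>. Mpo False \<omega>} \<omega> \<ge> 0"
    by (rule cprob_nonneg[OF base]) (auto intro!: pred_set)
  have n4: "AE \<omega> in M. cprobX M X {\<omega>. A \<omega>} \<omega> \<ge> 0"
    by (rule cprob_nonneg[OF base]) (auto intro!: pred_set)
  have n5: "AE \<omega> in M. cprobX M X {\<omega>. \<not> A \<omega>} \<omega> \<ge> 0"
    by (rule cprob_nonneg[OF base]) (auto intro!: pred_set)
  have n6: "AE \<omega> in M. cprobX M X {\<omega>. \<not> Mpo False \<omega>} \<omega> \<ge> 0"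
    by (rule cprob_nonneg[OF base]) (auto intro!: pred_set)
  have n7: "AE \<omega> in M. cprobX M X {\<omega>. Mpo True \<omega>} \<omega> \<ge> 0"
    by (rule cprob_nonneg[OF base]) (auto intro!: pred_set)
  show ?thesis
    using f1 f2 f3 f4 g0 g1 e1 e2 add0 mono n1 n2 n3 n4 n5 n6 n7 eA
  proof eventually_elim
    case (elim \<omega>)
    have ge1: "cprobX M X {\<omega>'. A \<omega>' = True \<and> Med \<omega>' = True} \<omega> \<ge> e"
      and ge2: "cprobX M X {\<omega>'. A \<omega>' = False \<and> Med \<omega>' = False} \<omega> \<ge> e"
      using elim(18) by blast+
    note * = alg[OF elim(11) elim(10) elim(12) elim(13) elim(14) elim(15) elim(16) elim(17) e,
        OF ge1[unfolded elim(7)] ge2[unfolded elim(8)] elim(9)[unfolded c1]]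
    show ?case
      unfolding Let_def ccprobX_def elim(1-6) f5 by (rule *)
  qed
qed

end
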